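(* Let $X,Y$ be Banach spaces and let $Z$ be a $1$-complemented subspace of $Y$. If $\mathrm{INA}_\pi(X\widehat{\otimes}_\pi Y)=X\widehat{\otimes}_\pi Y$, then $\mathrm{INA}_\pi(X\widehat{\otimes}_\pi Z)=X\widehat{\otimes}_\pi Z$.
   Context: A subspace $Z\subseteq Y$ is $1$-complemented if there is a bounded linear projection $P:Y\to Z$ with $\|P\|=1$. Definition: $u\in X\widehat{\otimes}_\pi Y$ is an integral projective norm-attaining tensor, written $u\in\mathrm{INA}_\pi(X\widehat{\otimes}_\pi Y)$, if there is a finite positive Borel measure $\mu$ on $B_X\times B_Y$ (norm topology) such that $\varphi:B_X\times B_Y\to X\widehat{\otimes}_\pi Y$, $\varphi(x,y)=x\otimes y$, is $\mu$-Bochner integrable, $u=\int_{B_X\times B_Y}x\otimes y\,d\mu(x,y)$ (Bochner integral) and $\|\mu\|=\|u\|_\pi$; then $u$ is said to be witnessed by $\mu$. *)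

theory Defs
  imports "HOL-Analysis.Analysis"
begin

text \<open>The library's has_bochner_integral requires
second countability of the target, so we use the standard definition:
approximation (a.e. pointwise and in L1-norm) by simple integrable functions.\<close>

definition gen_has_bochner_integral ::
  "'m measure \<Rightarrow> ('m \<Rightarrow> 'v::banach) \<Rightarrow> 'v \<Rightarrow> bool" where
  "gen_has_bochner_integral M f I \<longleftrightarrow>
     (\<exists>s :: nat \<Rightarrow> 'm \<Rightarrow> 'v.
        (\<forall>i. Bochner_Integration.simple_bochner_integrable M (s i)) \<and>
        (AE \<omega> in M. (\<lambda>i. s i \<omega>) \<longlonglongrightarrow> f \<omega>) \<and>
        (\<forall>i. (\<lambda>\<omega>. norm (f \<omega> - s i \<omega>)) \<in> borel_measurable M) \<and>
        (\<lambda>i. \<integral>\<^sup>+\<omega>. ennreal (norm (f \<omega> - s i \<omega>)) \<partial>M) \<longlonglongrightarrow> 0 \<and>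
        (\<lambda>i. Bochner_Integration.simple_bochner_integral M (s i)) \<longlonglongrightarrow> I)"

text \<open>This determines T up to isometric isomorphism as the completion of the algebraic
tensor product under the projective norm.\<close>

definition is_proj_tensor :: "('a::banach \<Rightarrow> 'b::banach \<Rightarrow> 't::banach) \<Rightarrow> bool" where
  "is_proj_tensor tp \<longleftrightarrow>
     bounded_bilinear tp \<and>
     (\<forall>x y. norm (tp x y) \<le> norm x * norm y) \<and>
     closure (span (range (\<lambda>(x, y). tp x y))) = UNIV \<and>
     (\<forall>B :: 'a \<Rightarrow> 'b \<Rightarrow> real. bounded_bilinear B \<longrightarrow>
        (\<exists>f :: 't \<Rightarrow> real. bounded_linear f \<and> (\<forall>x y. f (tp x y) = B x y) \<and>
           (\<forall>K. (\<forall>x y. \<bar>B x y\<bar> \<le> K * norm x * norm y) \<longrightarrow> onorm f \<le> K)))"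

definition INA_pi :: "('a::banach \<Rightarrow> 'b::banach \<Rightarrow> 't::banach) \<Rightarrow> 't \<Rightarrow> bool" where
  "INA_pi tp u \<longleftrightarrow>
     (\<exists>\<mu> :: ('a \<times> 'b) measure.
        space \<mu> = cball 0 1 \<times> cball 0 1 \<and>
        sets \<mu> = sets (restrict_space borel (cball 0 1 \<times> cball 0 1)) \<and>
        finite_measure \<mu> \<and>
        gen_has_bochner_integral \<mu> (\<lambda>(x, y). tp x y) u \<and>
        measure \<mu> (space \<mu>) = norm u)"

end

theory Submission
  imports Defs
begin


definition hbg :: "'v::real_normed_vector \<Rightarrow> ('v \<times> real) set \<Rightarrow> bool" where
  "hbg w G \<longleftrightarrow> (w, norm w) \<in> G \<and> (\<forall>x a b. (x,a)\<in>G \<longrightarrow> (x,b)\<in>G \<longrightarrow> a = b) \<and>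
     (\<forall>x a y b. (x,a)\<in>G \<longrightarrow> (y,b)\<in>G \<longrightarrow> (x+y,a+b)\<in>G) \<and>
     (\<forall>x a c. (x,a)\<in>G \<longrightarrow> (c *\<^sub>R x, c*a) \<in> G) \<and> (\<forall>x a. (x,a)\<in>G \<longrightarrow> a \<le> norm x)"

lemma hbg_D:
  assumes "hbg w G"
  shows "(w, norm w) \<in> G" "\<And>x a b. (x,a)\<in>G \<Longrightarrow> (x,b)\<in>G \<Longrightarrow> a = b"
    "\<And>x a y b. (x,a)\<in>G \<Longrightarrow> (y,b)\<in>G \<Longrightarrow> (x+y,a+b)\<in>G"
    "\<And>x a c. (x,a)\<in>G \<Longrightarrow> (c *\<^sub>R x, c*a) \<in> G" "\<And>x a. (x,a)\<in>G \<Longrightarrow> a \<le> norm x"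
  using assms unfolding hbg_def by blast+

lemma hbg_chain:
  assumes "C \<in> chains {G. hbg w G}" "C \<noteq> {}"
  shows "hbg w (\<Union>C)"
proof -
  have ch: "\<And>G H. G \<in> C \<Longrightarrow> H \<in> C \<Longrightarrow> G \<subseteq> H \<or> H \<subseteq> G" and hb: "\<And>G. G \<in> C \<Longrightarrow> hbg w G"
    using assms(1) unfolding chains_def chain_subset_def by blast+
  obtain G0 where "G0 \<in> C" using assms(2) by blast
  show ?thesis unfolding hbg_def
  proof (intro conjI allI impI)
    show "(w, norm w) \<in> \<Union>C" using hb[OF \<open>G0 \<in> C\<close>] \<open>G0 \<in> C\<close> unfolding hbg_def by blast
  next
    fix x a b assume "(x,a) \<in> \<Union>C" "(x,b) \<in> \<Union>C"
    then obtain G H where "G\<in>C" "H\<in>C" "(x,a)\<in>G" "(x,b)\<in>H" by blast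
    then have "(x,a) \<in> H \<and> (x,b) \<in> H \<or> (x,a) \<in> G \<and> (x,b) \<in> G" using ch[of G H] by blast
    then show "a = b" using hbg_D(2)[OF hb[OF \<open>G\<in>C\<close>]] hbg_D(2)[OF hb[OF \<open>H\<in>C\<close>]] by blast
  next
    fix x a y b assume "(x,a) \<in> \<Union>C" "(y,b) \<in> \<Union>C"
    then obtain G H where "G\<in>C" "H\<in>C" "(x,a)\<in>G" "(y,b)\<in>H" by blast
    then have "(x,a) \<in> H \<and> (y,b) \<in> H \<or> (x,a) \<in> G \<and> (y,b) \<in> G" using ch[of G H] by blast
    then show "(x+y,a+b) \<in> \<Union>C" using hbg_D(3)[OF hb[OF \<open>G\<in>C\<close>]] hbg_D(3)[OF hb[OF \<open>H\<in>C\<close>]]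
      \<open>G\<in>C\<close> \<open>H\<in>C\<close> by blast
  next
    fix x a c assume "(x,a) \<in> \<Union>C"
    then obtain G where "G\<in>C" "(x,a)\<in>G" by blast
    then show "(c *\<^sub>R x, c*a) \<in> \<Union>C" using hb[of G] unfolding hbg_def by blast
  next
    fix x a assume "(x,a) \<in> \<Union>C"
    then obtain G where "G\<in>C" "(x,a)\<in>G" by blast
    then show "a \<le> norm x" using hb[of G] unfolding hbg_def by blast
  qed
qed

lemma hbg_base: "hbg w (range (\<lambda>c. (c *\<^sub>R w, c * norm w)))"
  unfolding hbg_def
proof (intro conjI allI impI)
  show "(w, norm w) \<in> range (\<lambda>c. (c *\<^sub>R w, c * norm w))" by (rule image_eqI[of _ _ 1]) auto
next
  fix x a b assume "(x,a) \<in> range (\<lambda>c. (c *\<^sub>R w, c * norm w))" "(x,b) \<in> range (\<lambda>c. (c *\<^sub>R w, c * norm w))"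
  then obtain c d where h: "x = c *\<^sub>R w" "a = c * norm w" "x = d *\<^sub>R w" "b = d * norm w" by blast
  have "c *\<^sub>R w = d *\<^sub>R w" using h(1,3) by (rule trans[OF sym])
  then have "c = d \<or> w = 0" by auto
  then show "a = b" using h by auto
next
  fix x a y b assume "(x,a) \<in> range (\<lambda>c. (c *\<^sub>R w, c * norm w))" "(y,b) \<in> range (\<lambda>c. (c *\<^sub>R w, c * norm w))"
  then obtain c d where "x = c *\<^sub>R w" "a = c * norm w" "y = d *\<^sub>R w" "b = d * norm w" by auto
  then show "(x+y,a+b) \<in> range (\<lambda>c. (c *\<^sub>R w, c * norm w))"
    by (intro image_eqI[of _ _ "c+d"]) (auto simp: scaleR_add_left distrib_right)
next
  fix x a e assume "(x,a) \<in> range (\<lambda>c. (c *\<^sub>R w, c * norm w))"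
  then obtain c where "x = c *\<^sub>R w" "a = c * norm w" by auto
  then show "(e *\<^sub>R x, e*a) \<in> range (\<lambda>c. (c *\<^sub>R w, c * norm w))"
    by (intro image_eqI[of _ _ "e*c"]) auto
next
  fix x a assume "(x,a) \<in> range (\<lambda>c. (c *\<^sub>R w, c * norm w))"
  then obtain c where "x = c *\<^sub>R w" "a = c * norm w" by auto
  then show "a \<le> norm x" by (auto intro: mult_right_mono)
qed

lemma hbg_extend:
  assumes G: "hbg w G" and x0: "x0 \<notin> fst ` G"
  shows "\<exists>G'. hbg w G' \<and> G \<subseteq> G' \<and> G' \<noteq> G"
proof -
  note Gd = G[unfolded hbg_def]
  have fn: "\<And>x a b. (x,a)\<in>G \<Longrightarrow> (x,b)\<in>G \<Longrightarrow> a = b"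
    and add: "\<And>x a y b. (x,a)\<in>G \<Longrightarrow> (y,b)\<in>G \<Longrightarrow> (x+y,a+b)\<in>G"
    and scl: "\<And>x a c. (x,a)\<in>G \<Longrightarrow> (c *\<^sub>R x, c*a) \<in> G"
    and dom: "\<And>x a. (x,a)\<in>G \<Longrightarrow> a \<le> norm x"
    and wG: "(w, norm w) \<in> G"
    using Gd by blast+
  define L where "L = (\<lambda>(s,a). a - norm (s - x0)) ` G"
  have Lne: "L \<noteq> {}" using wG unfolding L_def by blast
  have key: "a - norm (s - x0) \<le> norm (s' + x0) - a'" if "(s,a)\<in>G" "(s',a')\<in>G" for s a s' a'
  proof -
    have "a + a' \<le> norm (s + s')" using dom[OF add[OF that]] .
    also have "\<dots> \<le> norm (s - x0) + norm (s' + x0)"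
      using norm_triangle_ineq[of "s - x0" "s' + x0"] by (simp add: algebra_simps)
    finally show ?thesis by simp
  qed
  have Lbdd: "bdd_above L" unfolding L_def bdd_above_def
    by (rule exI[of _ "norm (w + x0) - norm w"]) (auto intro: key[OF _ wG])
  define c where "c = Sup L"
  have c1: "a - norm (s - x0) \<le> c" if "(s,a)\<in>G" for s a
    unfolding c_def using that Lbdd by (intro cSup_upper) (auto simp: L_def)
  have c2: "c \<le> norm (s' + x0) - a'" if "(s',a')\<in>G" for s' a'
    unfolding c_def using Lne
    by (intro cSup_least) (auto simp: L_def intro!: key[OF _ that])
  define G' where "G' = {(s + t *\<^sub>R x0, a + t * c) | s a t. (s,a) \<in> G}"
  have zero: "(0,0) \<in> G" using scl[OF wG, of 0] by simp
  have uniq: "t = t' \<and> s = s'" if "(s,a)\<in>G" "(s',a')\<in>G" "s + t *\<^sub>R x0 = s' + t' *\<^sub>R x0" for s a s' a' t t'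
  proof (cases "t = t'")
    case True then show ?thesis using that by simp
  next
    case False
    have "(s + (-1) *\<^sub>R s', a + (-1) * a') \<in> G" using add[OF that(1) scl[OF that(2)]] .
    then have "((1/(t'-t)) *\<^sub>R (s - s'), (1/(t'-t)) * (a - a')) \<in> G"
      using scl by fastforce
    moreover have "s - s' = (t' - t) *\<^sub>R x0" using that(3) by (simp add: algebra_simps)
    ultimately have "(x0, (1/(t'-t)) * (a - a')) \<in> G" using False by simp
    then show ?thesis using x0 by force
  qed
  have "hbg w G'" unfolding hbg_def
  proof (intro conjI allI impI)
    show "(w, norm w) \<in> G'" unfolding G'_def using wG by force
  next
    fix x a b assume "(x,a)\<in>G'" "(x,b)\<in>G'"
    then obtain s1 a1 t1 s2 a2 t2 where h: "(s1,a1)\<in>G" "(s2,a2)\<in>G" "x = s1 + t1 *\<^sub>R x0" "x = s2 + t2 *\<^sub>R x0"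
      "a = a1 + t1 * c" "b = a2 + t2 * c" unfolding G'_def by blast
    have "s1 + t1 *\<^sub>R x0 = s2 + t2 *\<^sub>R x0" using h(3,4) by (rule trans[OF sym])
    then have "t1 = t2 \<and> s1 = s2" by (rule uniq[OF h(1,2)])
    then show "a = b" using h fn by blast
  next
    fix x a y b assume "(x,a)\<in>G'" "(y,b)\<in>G'"
    then obtain s1 a1 t1 s2 a2 t2 where h: "(s1,a1)\<in>G" "(s2,a2)\<in>G" "x = s1 + t1 *\<^sub>R x0" "y = s2 + t2 *\<^sub>R x0"
      "a = a1 + t1 * c" "b = a2 + t2 * c" unfolding G'_def by blast
    show "(x+y,a+b) \<in> G'" unfolding G'_def
      using add[OF h(1,2)] h(3-6)
      by (intro CollectI exI[of _ "s1+s2"] exI[of _ "a1+a2"] exI[of _ "t1+t2"])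
         (auto simp: algebra_simps)
  next
    fix x a e assume "(x,a)\<in>G'"
    then obtain s1 a1 t1 where h: "(s1,a1)\<in>G" "x = s1 + t1 *\<^sub>R x0" "a = a1 + t1 * c" unfolding G'_def by blast
    show "(e *\<^sub>R x, e*a) \<in> G'" unfolding G'_def
      using scl[OF h(1), of e] h(2,3)
      by (intro CollectI exI[of _ "e *\<^sub>R s1"] exI[of _ "e*a1"] exI[of _ "e*t1"])
         (auto simp: algebra_simps)
  next
    fix x a assume "(x,a)\<in>G'"
    then obtain s a1 t where h: "(s,a1)\<in>G" "x = s + t *\<^sub>R x0" "a = a1 + t * c" unfolding G'_def by blast
    show "a \<le> norm x"
    proof (cases "t = 0")
      case True then show ?thesis using h dom by simp
    next
      case False
      have hs: "((1/t) *\<^sub>R s, (1/t) * a1) \<in> G" using scl[OF h(1), of "1/t"] by simp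
      show ?thesis
      proof (cases "t > 0")
        case True
        have "c \<le> norm ((1/t) *\<^sub>R s + x0) - (1/t) * a1" using c2[OF hs] .
        then have "t * c \<le> t * (norm ((1/t) *\<^sub>R s + x0) - (1/t) * a1)" using True
          by (intro mult_left_mono) auto
        also have "\<dots> = t * norm ((1/t) *\<^sub>R s + x0) - a1" using False
          by (simp add: right_diff_distrib)
        finally have "t * c \<le> t * norm ((1/t) *\<^sub>R s + x0) - a1" .
        also have "t * norm ((1/t) *\<^sub>R s + x0) = norm (s + t *\<^sub>R x0)"
        proof -
          have "t * norm ((1/t) *\<^sub>R s + x0) = norm (t *\<^sub>R ((1/t) *\<^sub>R s + x0))" using True by simp
          also have "t *\<^sub>R ((1/t) *\<^sub>R s + x0) = s + t *\<^sub>R x0" using False by (simp add: scaleR_add_right)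
          finally show ?thesis .
        qed
        finally show ?thesis using h by simp
      next
        case neg: False
        define r where "r = -t"
        have r: "r > 0" using neg False by (simp add: r_def)
        have hs': "((1/r) *\<^sub>R s, (1/r) * a1) \<in> G" using scl[OF h(1), of "1/r"] by simp
        have "(1/r) * a1 - norm ((1/r) *\<^sub>R s - x0) \<le> c" using c1[OF hs'] .
        then have "a1 - r * norm ((1/r) *\<^sub>R s - x0) \<le> r * c" using r
          by (simp add: field_simps)
        also have "r * norm ((1/r) *\<^sub>R s - x0) = norm (s + t *\<^sub>R x0)"
        proof -
          have "r * norm ((1/r) *\<^sub>R s - x0) = norm (r *\<^sub>R ((1/r) *\<^sub>R s - x0))" using r by simp
          also have "r *\<^sub>R ((1/r) *\<^sub>R s - x0) = s + t *\<^sub>R x0" using r by (simp add: scaleR_diff_right r_def)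
          finally show ?thesis .
        qed
        finally show ?thesis using h by (simp add: r_def)
      qed
    qed
  qed
  moreover have "G \<subseteq> G'" unfolding G'_def by force
  moreover have "(0 + 1 *\<^sub>R x0, 0 + 1 * c) \<in> G'" unfolding G'_def using zero by blast
  then have "G' \<noteq> G" using x0 by force
  ultimately show ?thesis by blast
qed

lemma hahn_banach_norming:
  fixes w :: "'v::real_normed_vector"
  shows "\<exists>f. linear f \<and> (\<forall>x. \<bar>f x\<bar> \<le> norm x) \<and> f w = norm w"
proof -
  have "\<forall>C\<in>chains {G. hbg w G}. \<exists>U\<in>{G. hbg w G}. \<forall>X\<in>C. X \<subseteq> U"
  proof
    fix C assume C: "C \<in> chains {G. hbg w G}"
    show "\<exists>U\<in>{G. hbg w G}. \<forall>X\<in>C. X \<subseteq> U"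
    proof (cases "C = {}")
      case True then show ?thesis using hbg_base by blast
    next
      case False then show ?thesis using hbg_chain[OF C] by blast
    qed
  qed
  from Zorn_Lemma2[OF this] obtain G where G: "hbg w G" and max: "\<And>X. hbg w X \<Longrightarrow> G \<subseteq> X \<Longrightarrow> X = G"
    by blast
  have all: "x \<in> fst ` G" for x
    using hbg_extend[OF G, of x] max by blast
  note Gd = G[unfolded hbg_def]
  define f where "f x = (THE a. (x,a) \<in> G)" for x
  have fG: "(x, f x) \<in> G" for x
  proof -
    obtain a where a: "(x,a) \<in> G" using all[of x] by force
    then have "f x = a" unfolding f_def using Gd by (intro the_equality) blast+
    then show ?thesis using a by simp
  qed
  have fe: "f x = a" if "(x,a) \<in> G" for x a using fG[of x] that Gd by blast
  have lin: "linear f"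
  proof
    fix x y show "f (x + y) = f x + f y" using Gd fG[of x] fG[of y] by (intro fe) blast
  next
    fix c x show "f (c *\<^sub>R x) = c *\<^sub>R f x" using Gd fG[of x] by (simp, intro fe) blast
  qed
  have "\<bar>f x\<bar> \<le> norm x" for x
  proof -
    have "f x \<le> norm x" using Gd fG[of x] by blast
    moreover have "f (-x) \<le> norm (-x)" using Gd fG[of "-x"] by blast
    moreover have "f (-x) = - f x" using linear_neg[OF lin] .
    ultimately show ?thesis by simp
  qed
  moreover have "f w = norm w" using fe Gd by blast
  ultimately show ?thesis using lin by blast
qed



lemma tensor_norm_ineq:
  fixes t1 :: "'a::banach \<Rightarrow> 'b::banach \<Rightarrow> 's::banach" and t2 :: "'a \<Rightarrow> 'c::banach \<Rightarrow> 't::banach"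
    and L :: "'b \<Rightarrow> 'c"
  assumes t1: "is_proj_tensor t1" and t2: "bounded_bilinear t2"
    and t2n: "\<And>x z. norm (t2 x z) \<le> norm x * norm z"
    and L: "linear L" and Ln: "\<And>y. norm (L y) \<le> norm y"
    and HB: "\<And>w::'t. \<exists>f. linear f \<and> (\<forall>x. \<bar>f x\<bar> \<le> norm x) \<and> f w = norm w"
  shows "norm (\<Sum>(x,y)\<leftarrow>ps. t2 x (L y)) \<le> norm (\<Sum>(x,y)\<leftarrow>ps. t1 x y)"
proof -
  obtain \<phi> where \<phi>: "linear \<phi>" "\<And>x. \<bar>\<phi> x\<bar> \<le> norm x" "\<phi> (\<Sum>(x,y)\<leftarrow>ps. t2 x (L y)) = norm (\<Sum>(x,y)\<leftarrow>ps. t2 x (L y))"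
    using HB by blast
  define B where "B x y = \<phi> (t2 x (L y))" for x y
  have Bb: "\<bar>B x y\<bar> \<le> 1 * norm x * norm y" for x y
  proof -
    have "\<bar>B x y\<bar> \<le> norm (t2 x (L y))" unfolding B_def by (rule \<phi>(2))
    also have "\<dots> \<le> norm x * norm (L y)" by (rule t2n)
    also have "\<dots> \<le> norm x * norm y" by (intro mult_left_mono Ln) auto
    finally show ?thesis by simp
  qed
  have bB: "bounded_bilinear B"
    unfolding bounded_bilinear_def
  proof (intro conjI allI)
    fix a a' b show "B (a + a') b = B a b + B a' b" unfolding B_def
      by (simp add: bounded_bilinear.add_left[OF t2] linear_add[OF \<phi>(1)])
  next
    fix a b b' show "B a (b + b') = B a b + B a b'" unfolding B_def
      by (simp add: linear_add[OF L] bounded_bilinear.add_right[OF t2] linear_add[OF \<phi>(1)])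
  next
    fix r a b show "B (r *\<^sub>R a) b = r *\<^sub>R B a b" unfolding B_def
      by (simp add: bounded_bilinear.scaleR_left[OF t2] linear_scale[OF \<phi>(1)])
  next
    fix r a b show "B a (r *\<^sub>R b) = r *\<^sub>R B a b" unfolding B_def
      by (simp add: linear_scale[OF L] bounded_bilinear.scaleR_right[OF t2] linear_scale[OF \<phi>(1)])
  next
    show "\<exists>K. \<forall>a b. norm (B a b) \<le> norm a * norm b * K"
      using Bb by (intro exI[of _ 1]) simp
  qed
  obtain f where f: "bounded_linear f" "\<And>x y. f (t1 x y) = B x y"
    "\<And>K. (\<forall>x y. \<bar>B x y\<bar> \<le> K * norm x * norm y) \<Longrightarrow> onorm f \<le> K"
    using t1 bB unfolding is_proj_tensor_def by blast
  have of: "onorm f \<le> 1" using f(3) Bb by blast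
  have eq: "\<phi> (\<Sum>(x,y)\<leftarrow>qs. t2 x (L y)) = f (\<Sum>(x,y)\<leftarrow>qs. t1 x y)" for qs
  proof (induction qs)
    case Nil then show ?case using linear_0[OF \<phi>(1)] linear_0[OF bounded_linear.linear[OF f(1)]] by simp
  next
    case (Cons p qs) then show ?case
      by (cases p) (simp add: linear_add[OF \<phi>(1)] linear_add[OF bounded_linear.linear[OF f(1)]] f(2) B_def)
  qed
  have "norm (\<Sum>(x,y)\<leftarrow>ps. t2 x (L y)) = f (\<Sum>(x,y)\<leftarrow>ps. t1 x y)" using \<phi>(3) eq by simp
  also have "\<dots> \<le> norm (f (\<Sum>(x,y)\<leftarrow>ps. t1 x y))" by simp
  also have "\<dots> \<le> onorm f * norm (\<Sum>(x,y)\<leftarrow>ps. t1 x y)" by (rule onorm[OF f(1)])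
  also have "\<dots> \<le> 1 * norm (\<Sum>(x,y)\<leftarrow>ps. t1 x y)" by (intro mult_right_mono of) auto
  finally show ?thesis by simp
qed

lemma sum_list_scale_t:
  assumes "bounded_bilinear t"
  shows "(\<Sum>(x,y)\<leftarrow>map (\<lambda>(x,y). (c *\<^sub>R x, y)) ps. t x y) = c *\<^sub>R (\<Sum>(x,y)\<leftarrow>ps. t x y)"
  by (induction ps) (auto simp: bounded_bilinear.scaleR_left[OF assms] scaleR_add_right)

lemma tensor_map:
  fixes t1 :: "'a::banach \<Rightarrow> 'b::banach \<Rightarrow> 's::banach" and t2 :: "'a \<Rightarrow> 'c::banach \<Rightarrow> 't::banach"
    and L :: "'b \<Rightarrow> 'c"
  assumes t1: "is_proj_tensor t1" and t2: "bounded_bilinear t2"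
    and t2n: "\<And>x z. norm (t2 x z) \<le> norm x * norm z"
    and L: "linear L" and Ln: "\<And>y. norm (L y) \<le> norm y"
    and HB: "\<And>w::'t. \<exists>f. linear f \<and> (\<forall>x. \<bar>f x\<bar> \<le> norm x) \<and> f w = norm w"
  shows "\<exists>E. bounded_linear E \<and> (\<forall>x y. E (t1 x y) = t2 x (L y)) \<and> (\<forall>w. norm (E w) \<le> norm w)"
proof -
  have t1b: "bounded_bilinear t1" and dense: "closure (span (range (\<lambda>(x, y). t1 x y))) = UNIV"
    using t1 unfolding is_proj_tensor_def by blast+
  define R where "R w w' \<longleftrightarrow> (\<exists>ps. w = (\<Sum>(x,y)\<leftarrow>ps. t1 x y) \<and> w' = (\<Sum>(x,y)\<leftarrow>ps. t2 x (L y)))" for w w'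
  have Radd: "R (a + b) (a' + b')" if ab: "R a a'" "R b b'" for a a' b b'
  proof -
    obtain ps qs where "a = (\<Sum>(x,y)\<leftarrow>ps. t1 x y)" "a' = (\<Sum>(x,y)\<leftarrow>ps. t2 x (L y))"
      "b = (\<Sum>(x,y)\<leftarrow>qs. t1 x y)" "b' = (\<Sum>(x,y)\<leftarrow>qs. t2 x (L y))"
      using ab unfolding R_def by blast
    then show ?thesis unfolding R_def by (intro exI[of _ "ps @ qs"]) simp
  qed
  have Rscl: "R (c *\<^sub>R a) (c *\<^sub>R a')" if ab: "R a a'" for a a' c
  proof -
    obtain ps where "a = (\<Sum>(x,y)\<leftarrow>ps. t1 x y)" "a' = (\<Sum>(x,y)\<leftarrow>ps. t2 x (L y))"
      using ab unfolding R_def by blast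
    define qs where "qs = map (\<lambda>(x,y). (c *\<^sub>R x, y)) ps"
    have q2: "(\<Sum>(x,y)\<leftarrow>qs. t2 x (L y)) = c *\<^sub>R (\<Sum>(x,y)\<leftarrow>ps. t2 x (L y))"
      unfolding qs_def by (induction ps) (auto simp: bounded_bilinear.scaleR_left[OF t2] scaleR_add_right)
    have q1: "(\<Sum>(x,y)\<leftarrow>qs. t1 x y) = c *\<^sub>R (\<Sum>(x,y)\<leftarrow>ps. t1 x y)"
      unfolding qs_def by (induction ps) (auto simp: bounded_bilinear.scaleR_left[OF t1b] scaleR_add_right)
    show ?thesis unfolding R_def
      by (rule exI[of _ qs]) (simp only: q1 q2 \<open>a = _\<close> \<open>a' = _\<close>)
  qed
  have Rlip: "norm (a' - b') \<le> norm (a - b)" if "R a a'" "R b b'" for a a' b b'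
  proof -
    have "R (a + (-1) *\<^sub>R b) (a' + (-1) *\<^sub>R b')" by (intro Radd Rscl that)
    then obtain ps where "a - b = (\<Sum>(x,y)\<leftarrow>ps. t1 x y)" "a' - b' = (\<Sum>(x,y)\<leftarrow>ps. t2 x (L y))"
      unfolding R_def by auto
    then show ?thesis using tensor_norm_ineq[OF t1 t2 t2n L Ln HB, of ps] by simp
  qed
  define S where "S = {w. \<exists>w'. R w w'}"
  have subS: "subspace S" unfolding subspace_def S_def
  proof (intro conjI ballI allI)
    show "0 \<in> {w. \<exists>w'. R w w'}" unfolding R_def by (auto intro!: exI[of _ "[]"])
  qed (use Radd Rscl in blast)+
  have "range (\<lambda>(x, y). t1 x y) \<subseteq> S"
  proof
    fix w assume "w \<in> range (\<lambda>(x, y). t1 x y)"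
    then obtain x y where "w = t1 x y" by auto
    then show "w \<in> S" unfolding S_def R_def by (auto intro!: exI[of _ "[(x,y)]"])
  qed
  then have "span (range (\<lambda>(x, y). t1 x y)) \<subseteq> S" using subS by (rule span_minimal)
  then have clS: "closure S = UNIV" using dense closure_mono by blast
  define h where "h w = (SOME w'. R w w')" for w
  have hR: "R w (h w)" if "w \<in> S" for w using that unfolding S_def h_def by (auto intro: someI)
  have huniq: "h w = w'" if "R w w'" for w w'
  proof -
    have "norm (h w - w') \<le> norm (w - w)" using Rlip[OF hR that] that unfolding S_def by blast
    then show ?thesis by simp
  qed
  have uc: "uniformly_continuous_on S h"
    unfolding uniformly_continuous_on_def
  proof (intro allI impI)
    fix e :: real assume "e > 0"
    show "\<exists>d>0. \<forall>x\<in>S. \<forall>x'\<in>S. dist x' x < d \<longrightarrow> dist (h x') (h x) < e"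
      using \<open>e > 0\<close> Rlip[OF hR hR] by (intro exI[of _ e]) (auto simp: dist_norm intro: le_less_trans)
  qed
  obtain E where E: "uniformly_continuous_on (closure S) E" "\<And>x. x \<in> S \<Longrightarrow> h x = E x"
    using uniformly_continuous_on_extension_on_closure[OF uc] by metis
  have cE: "continuous_on UNIV E" using uniformly_continuous_imp_continuous[OF E(1)] clS by simp
  have cEc: "continuous_on UNIV (\<lambda>x. E (f x))" if "continuous_on UNIV f" for f :: "'s \<Rightarrow> 's"
    by (rule continuous_on_compose2[OF cE that]) auto
  have dense_ext: "\<forall>x. P x" if "closed {x. P x}" "\<And>x. x \<in> S \<Longrightarrow> P x" for P
  proof -
    have "closure S \<subseteq> {x. P x}" using that by (intro closure_minimal) auto
    then show ?thesis using clS by auto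
  qed
  have Eadd: "E (a + b) = E a + E b" for a b
  proof -
    have "\<forall>a. E (a + b) = E a + E b" if "b \<in> S" for b
    proof (rule dense_ext)
      show "closed {a. E (a + b) = E a + E b}"
        by (intro closed_Collect_eq cEc continuous_intros cE)
      fix a assume "a \<in> S"
      then show "E (a + b) = E a + E b" using that hR Radd huniq E(2) subS
        by (metis subspace_add)
    qed
    then have "\<forall>b. E (a + b) = E a + E b"
    proof (intro dense_ext)
      show "closed {b. E (a + b) = E a + E b}"
        by (intro closed_Collect_eq cEc continuous_intros cE)
    qed auto
    then show ?thesis by blast
  qed
  have Escl: "E (c *\<^sub>R a) = c *\<^sub>R E a" for c a
  proof -
    have "\<forall>a. E (c *\<^sub>R a) = c *\<^sub>R E a"
    proof (rule dense_ext)
      show "closed {a. E (c *\<^sub>R a) = c *\<^sub>R E a}"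
        by (intro closed_Collect_eq cEc continuous_intros cE)
      fix a assume "a \<in> S"
      then show "E (c *\<^sub>R a) = c *\<^sub>R E a" using hR Rscl huniq E(2) subS
        by (metis subspace_scale)
    qed
    then show ?thesis by blast
  qed
  have En: "norm (E a) \<le> norm a" for a
  proof -
    have "\<forall>a. norm (E a) \<le> norm a"
    proof (rule dense_ext)
      show "closed {a. norm (E a) \<le> norm a}"
        by (intro closed_Collect_le continuous_intros cE)
      fix a assume "a \<in> S"
      have r0: "R 0 0" unfolding R_def by (auto intro!: exI[of _ "[]"])
      have "norm (h a - 0) \<le> norm (a - 0)" by (rule Rlip[OF hR[OF \<open>a \<in> S\<close>] r0])
      then show "norm (E a) \<le> norm a" using E(2)[OF \<open>a \<in> S\<close>] by simp
    qed
    then show ?thesis by blast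
  qed
  have Et: "E (t1 x y) = t2 x (L y)" for x y
  proof -
    have r: "R (t1 x y) (t2 x (L y))" unfolding R_def by (auto intro!: exI[of _ "[(x,y)]"])
    then have "t1 x y \<in> S" unfolding S_def by blast
    then show ?thesis using E(2) huniq[OF r] by metis
  qed
  have "bounded_linear E"
    by (rule bounded_linear_intro[where K=1]) (auto simp: Eadd Escl En)
  then show ?thesis using Et En by blast
qed



lemma ex_argmin_nat: "\<exists>k\<le>N. \<forall>j\<le>N. (d::nat \<Rightarrow> real) k \<le> d j"
proof (induction N)
  case 0 then show ?case by auto
next
  case (Suc N)
  then obtain k where k: "k \<le> N" "\<forall>j\<le>N. d k \<le> d j" by blast
  show ?case
  proof (cases "d (Suc N) \<le> d k")
    case True
    then show ?thesis using k by (intro exI[of _ "Suc N"]) (auto simp: le_Suc_eq)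
  next
    case False
    then show ?thesis using k by (intro exI[of _ k]) (auto simp: le_Suc_eq)
  qed
qed

lemma transfer_integral:
  fixes \<mu> :: "'m measure" and N :: "'n measure" and T :: "'m \<Rightarrow> 'n"
    and f :: "'m \<Rightarrow> 's::banach" and g :: "'n \<Rightarrow> 't::banach" and Pt :: "'s \<Rightarrow> 't"
  assumes fin: "finite_measure \<mu>"
    and T: "T \<in> measurable \<mu> N" and Tsurj: "T ` space \<mu> = space N"
    and int: "gen_has_bochner_integral \<mu> f v"
    and Pt: "bounded_linear Pt" and Ptn: "\<And>w. norm (Pt w) \<le> norm w"
    and gT: "\<And>\<omega>. \<omega> \<in> space \<mu> \<Longrightarrow> g (T \<omega>) = Pt (f \<omega>)"
    and gmeas: "\<And>c. (\<lambda>p. dist (g p) c) \<in> borel_measurable N"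
    and gclosed: "\<And>C. closed C \<Longrightarrow> {p \<in> space N. g p \<in> C} \<in> sets N"
    and gbd: "\<And>p. p \<in> space N \<Longrightarrow> norm (g p) \<le> Bd"
    and ne: "space \<mu> \<noteq> {}"
  shows "gen_has_bochner_integral (distr \<mu> N T) g (Pt v)"
proof -
  define \<nu> where "\<nu> = distr \<mu> N T"
  have sp\<nu>: "space \<nu> = space N" and sets\<nu>: "sets \<nu> = sets N" unfolding \<nu>_def by simp_all
  have fin\<nu>: "finite_measure \<nu>" unfolding \<nu>_def by (rule finite_measure.finite_measure_distr[OF fin T])
  obtain s where s: "\<And>i. Bochner_Integration.simple_bochner_integrable \<mu> (s i)"
    and sae: "AE \<omega> in \<mu>. (\<lambda>i. s i \<omega>) \<longlonglongrightarrow> f \<omega>"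
    and smeas: "\<And>i. (\<lambda>\<omega>. norm (f \<omega> - s i \<omega>)) \<in> borel_measurable \<mu>"
    and sL1: "(\<lambda>i. \<integral>\<^sup>+\<omega>. ennreal (norm (f \<omega> - s i \<omega>)) \<partial>\<mu>) \<longlonglongrightarrow> 0"
    and slim: "(\<lambda>i. Bochner_Integration.simple_bochner_integral \<mu> (s i)) \<longlonglongrightarrow> v"
    using int unfolding gen_has_bochner_integral_def by blast
  have ssf: "simple_function \<mu> (s i)" for i using s[of i] by (auto elim: simple_bochner_integrable.cases)
  define D where "D = (\<Union>i. s i ` space \<mu>)"
  have cs: "countable (s i ` space \<mu>)" for i
    using ssf[of i] by (intro countable_finite) (simp add: simple_function_def)
  have cD: "countable D" unfolding D_def using cs by blast
  define E0 where "E0 = Pt ` D"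
  have cE0: "countable E0" unfolding E0_def using cD by simp
  have neE0: "E0 \<noteq> {}" unfolding E0_def D_def using ne by auto
  define e where "e = from_nat_into E0"
  have rng: "range e = E0" unfolding e_def using cE0 neE0 by simp
  have pt: "g (T \<omega>) \<in> closure E0" if \<omega>: "\<omega> \<in> space \<mu>" and c: "(\<lambda>i. s i \<omega>) \<longlonglongrightarrow> f \<omega>" for \<omega>
  proof -
    have "(\<lambda>i. Pt (s i \<omega>)) \<longlonglongrightarrow> Pt (f \<omega>)" by (rule bounded_linear.tendsto[OF Pt c])
    moreover have "\<forall>i. Pt (s i \<omega>) \<in> E0" unfolding E0_def D_def using \<omega> by blast
    ultimately have "Pt (f \<omega>) \<in> closure E0" unfolding closure_sequential
      by (intro exI[of _ "\<lambda>i. Pt (s i \<omega>)"] conjI) auto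
    then show "g (T \<omega>) \<in> closure E0" using gT[OF \<omega>] by simp
  qed
  have aeg\<mu>: "AE \<omega> in \<mu>. g (T \<omega>) \<in> closure E0"
    using sae AE_space by eventually_elim (blast intro: pt)
  have aeg: "AE p in \<nu>. g p \<in> closure E0"
    unfolding \<nu>_def using aeg\<mu> by (subst AE_distr_iff[OF T gclosed]) auto
  define K where "K n p = (LEAST k. k \<le> n \<and> (\<forall>j\<le>n. dist (g p) (e k) \<le> dist (g p) (e j)))" for n p
  have Kp: "K n p \<le> n \<and> (\<forall>j\<le>n. dist (g p) (e (K n p)) \<le> dist (g p) (e j))" for n p
  proof -
    obtain k where "k \<le> n" "\<forall>j\<le>n. dist (g p) (e k) \<le> dist (g p) (e j)"
      using ex_argmin_nat[of n "\<lambda>j. dist (g p) (e j)"] by blast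
    then have "k \<le> n \<and> (\<forall>j\<le>n. dist (g p) (e k) \<le> dist (g p) (e j))" by blast
    then show ?thesis unfolding K_def by (rule LeastI)
  qed
  have Kmeas: "K n \<in> measurable N (count_space UNIV)" for n
    unfolding K_def using gmeas by measurable
  define F where "F n p = e (K n p)" for n p
  have Fsf: "simple_function N (F n)" for n
    unfolding simple_function_def
  proof
    have "F n ` space N \<subseteq> e ` {..n}" unfolding F_def using Kp by auto
    then show "finite (F n ` space N)" by (rule finite_subset) auto
  next
    show "\<forall>x\<in>F n ` space N. F n -` {x} \<inter> space N \<in> sets N"
    proof
      fix y
      have "F n -` {y} \<inter> space N = K n -` (e -` {y}) \<inter> space N" unfolding F_def by auto
      also have "\<dots> \<in> sets N" using Kmeas[of n] by (auto simp: measurable_def)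
      finally show "F n -` {y} \<inter> space N \<in> sets N" .
    qed
  qed
  have Fsf\<nu>: "simple_function \<nu> (F n)" for n
    using iffD1[OF simple_function_cong_algebra[OF sets\<nu> sp\<nu>, of "F n"] Fsf[of n]] .
  have Fsbi: "Bochner_Integration.simple_bochner_integrable \<nu> (F n)" for n
    by (rule simple_bochner_integrable.intros[OF Fsf\<nu>]) (use finite_measure.emeasure_finite[OF fin\<nu>] in simp)
  have dmeas: "(\<lambda>p. norm (g p - F n p)) \<in> borel_measurable N" for n
  proof -
    have "(\<lambda>p. dist (g p) (e (K n p))) \<in> borel_measurable N"
      by (rule measurable_compose_countable'[OF gmeas Kmeas]) auto
    then show ?thesis unfolding F_def dist_norm .
  qed
  have dmeas\<nu>: "(\<lambda>p. norm (g p - F n p)) \<in> borel_measurable \<nu>" for n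
    by (subst measurable_cong_sets[OF sets\<nu> refl]) (rule dmeas)
  have Fconv: "(\<lambda>n. F n p) \<longlonglongrightarrow> g p" if gp: "g p \<in> closure E0" for p
    unfolding lim_sequentially
  proof (intro allI impI)
    fix r :: real assume "r > 0"
    obtain y where "y \<in> E0" "dist y (g p) < r"
      using gp[unfolded closure_approachable, rule_format, OF \<open>r > 0\<close>] by blast
    then obtain k where k: "dist (e k) (g p) < r" using rng by (metis rangeE)
    show "\<exists>no. \<forall>n\<ge>no. dist (F n p) (g p) < r"
    proof (intro exI allI impI)
      fix n assume "k \<le> n"
      then have "dist (g p) (F n p) \<le> dist (g p) (e k)" unfolding F_def using Kp by blast
      then show "dist (F n p) (g p) < r" using k by (simp add: dist_commute)
    qed
  qed
  have Fae: "AE p in \<nu>. (\<lambda>n. F n p) \<longlonglongrightarrow> g p" using aeg by eventually_elim (rule Fconv)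
  define C where "C = Bd + norm (e 0)"
  have Fbd: "norm (g p - F n p) \<le> C" if "p \<in> space N" for n p
  proof -
    have "norm (g p - F n p) = dist (g p) (e (K n p))" unfolding F_def dist_norm ..
    also have "\<dots> \<le> dist (g p) (e 0)" using Kp by blast
    also have "\<dots> \<le> norm (g p) + norm (e 0)" unfolding dist_norm by (rule norm_triangle_ineq4)
    also have "\<dots> \<le> C" unfolding C_def using gbd[OF that] by simp
    finally show ?thesis .
  qed
  have FL1: "(\<lambda>n. \<integral>\<^sup>+p. ennreal (norm (g p - F n p)) \<partial>\<nu>) \<longlonglongrightarrow> 0"
  proof -
    have "(\<lambda>n. \<integral>\<^sup>+p. ennreal (norm (0 - norm (g p - F n p))) \<partial>\<nu>) \<longlonglongrightarrow> 0"
    proof (rule nn_integral_dominated_convergence_norm[where w="\<lambda>_. C"])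
      show "\<And>i. (\<lambda>p. norm (g p - F i p)) \<in> borel_measurable \<nu>" by (rule dmeas\<nu>)
      show "(\<lambda>_. 0::real) \<in> borel_measurable \<nu>" by simp
      show "(\<lambda>_. C) \<in> borel_measurable \<nu>" by simp
      show "AE p in \<nu>. norm (norm (g p - F j p)) \<le> C" for j
        by (rule AE_I2) (use Fbd sp\<nu> in auto)
      show "(\<integral>\<^sup>+ x. ennreal C \<partial>\<nu>) < \<infinity>"
        using finite_measure.emeasure_finite[OF fin\<nu>, of "space \<nu>"]
        by (simp add: nn_integral_const ennreal_mult_less_top less_top)
      show "AE p in \<nu>. (\<lambda>i. norm (g p - F i p)) \<longlonglongrightarrow> 0"
        using Fae
      proof eventually_elim
        case (elim p)
        then have "(\<lambda>i. F i p - g p) \<longlonglongrightarrow> 0" by (rule LIM_zero)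
        then have "(\<lambda>i. norm (F i p - g p)) \<longlonglongrightarrow> 0" by (rule tendsto_norm_zero)
        then show ?case by (simp add: norm_minus_commute)
      qed
    qed
    then show ?thesis by simp
  qed
  define H where "H n \<omega> = F n (T \<omega>)" for n \<omega>
  define G where "G n \<omega> = Pt (s n \<omega>)" for n \<omega>
  have Hsbi: "Bochner_Integration.simple_bochner_integrable \<mu> (H n)" for n
    unfolding H_def
    by (rule simple_bochner_integrable.intros[OF simple_function_comp[OF T Fsf]])
       (use finite_measure.emeasure_finite[OF fin] in simp)
  have Gsbi: "Bochner_Integration.simple_bochner_integrable \<mu> (G n)" for n
    unfolding G_def
    using simple_bochner_integrable_compose2[where p="\<lambda>x y. Pt x", OF _ s s] linear_0[OF bounded_linear.linear[OF Pt]]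
    by simp
  have HF: "Bochner_Integration.simple_bochner_integral \<nu> (F n) = Bochner_Integration.simple_bochner_integral \<mu> (H n)" for n
  proof -
    have img: "H n ` space \<mu> = F n ` space N" unfolding H_def Tsurj[symmetric] image_image ..
    have "measure \<nu> {p \<in> space \<nu>. F n p = y} = measure \<mu> {\<omega> \<in> space \<mu>. H n \<omega> = y}" for y
    proof -
      have "{p \<in> space N. F n p = y} = F n -` {y} \<inter> space N" by auto
      moreover have "F n -` {y} \<inter> space N \<in> sets N"
        using Fsf[of n] by (auto intro: measurable_sets[OF measurable_simple_function] simp: simple_function_def)
      ultimately have m: "{p \<in> space N. F n p = y} \<in> sets N" by simp
      have "T -` {p \<in> space N. F n p = y} \<inter> space \<mu> = {\<omega> \<in> space \<mu>. H n \<omega> = y}"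
        unfolding H_def using measurable_space[OF T] by auto
      then show ?thesis unfolding \<nu>_def using measure_distr[OF T m] by simp
    qed
    then show ?thesis unfolding simple_bochner_integral_def img sp\<nu> by simp
  qed
  have GP: "Bochner_Integration.simple_bochner_integral \<mu> (G n) = Pt (Bochner_Integration.simple_bochner_integral \<mu> (s n))" for n
    unfolding G_def by (rule simple_bochner_integral_linear[OF bounded_linear.linear[OF Pt] s])
  have est: "ennreal (norm (Bochner_Integration.simple_bochner_integral \<nu> (F n) - Pt (Bochner_Integration.simple_bochner_integral \<mu> (s n))))
     \<le> (\<integral>\<^sup>+p. ennreal (norm (g p - F n p)) \<partial>\<nu>) + (\<integral>\<^sup>+\<omega>. ennreal (norm (f \<omega> - s n \<omega>)) \<partial>\<mu>)" for n
  proof -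
    have HGsbi: "Bochner_Integration.simple_bochner_integrable \<mu> (\<lambda>\<omega>. H n \<omega> - G n \<omega>)"
      by (rule simple_bochner_integrable_compose2[where p="\<lambda>x y. x - y", OF _ Hsbi Gsbi]) simp
    have "norm (Bochner_Integration.simple_bochner_integral \<nu> (F n) - Pt (Bochner_Integration.simple_bochner_integral \<mu> (s n)))
        = norm (Bochner_Integration.simple_bochner_integral \<mu> (\<lambda>\<omega>. H n \<omega> - G n \<omega>))"
      by (simp only: HF GP[symmetric] simple_bochner_integral_diff[OF Hsbi Gsbi])
    also have "\<dots> \<le> Bochner_Integration.simple_bochner_integral \<mu> (\<lambda>\<omega>. norm (H n \<omega> - G n \<omega>))"
      by (rule simple_bochner_integral_norm_bound[OF HGsbi])
    finally have 1: "ennreal (norm (Bochner_Integration.simple_bochner_integral \<nu> (F n) - Pt (Bochner_Integration.simple_bochner_integral \<mu> (s n))))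
        \<le> ennreal (Bochner_Integration.simple_bochner_integral \<mu> (\<lambda>\<omega>. norm (H n \<omega> - G n \<omega>)))" by (rule ennreal_leI)
    also have "\<dots> = (\<integral>\<^sup>+\<omega>. norm (H n \<omega> - G n \<omega>) \<partial>\<mu>)"
      using simple_bochner_integral_eq_nn_integral[OF simple_bochner_integrable_compose2[where p="\<lambda>x y. norm (x - y)", OF _ Hsbi Gsbi]]
      by simp
    also have "\<dots> \<le> (\<integral>\<^sup>+\<omega>. ennreal (norm (g (T \<omega>) - F n (T \<omega>))) + ennreal (norm (f \<omega> - s n \<omega>)) \<partial>\<mu>)"
    proof (rule nn_integral_mono)
      fix \<omega> assume \<omega>: "\<omega> \<in> space \<mu>"
      have "H n \<omega> - G n \<omega> = (F n (T \<omega>) - g (T \<omega>)) + Pt (f \<omega> - s n \<omega>)"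
        unfolding H_def G_def gT[OF \<omega>] linear_diff[OF bounded_linear.linear[OF Pt]] by simp
      then have "norm (H n \<omega> - G n \<omega>) \<le> norm (F n (T \<omega>) - g (T \<omega>)) + norm (Pt (f \<omega> - s n \<omega>))"
        by (simp only: norm_triangle_ineq)
      also have "\<dots> \<le> norm (g (T \<omega>) - F n (T \<omega>)) + norm (f \<omega> - s n \<omega>)"
        using Ptn[of "f \<omega> - s n \<omega>"] by (simp add: norm_minus_commute)
      finally have "ennreal (norm (H n \<omega> - G n \<omega>)) \<le> ennreal (norm (g (T \<omega>) - F n (T \<omega>)) + norm (f \<omega> - s n \<omega>))"
        by (rule ennreal_leI)
      also have "\<dots> = ennreal (norm (g (T \<omega>) - F n (T \<omega>))) + ennreal (norm (f \<omega> - s n \<omega>))"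
        by (rule ennreal_plus) simp_all
      finally show "ennreal (norm (H n \<omega> - G n \<omega>)) \<le> ennreal (norm (g (T \<omega>) - F n (T \<omega>))) + ennreal (norm (f \<omega> - s n \<omega>))" .
    qed
    also have "\<dots> = (\<integral>\<^sup>+\<omega>. ennreal (norm (g (T \<omega>) - F n (T \<omega>))) \<partial>\<mu>) + (\<integral>\<^sup>+\<omega>. ennreal (norm (f \<omega> - s n \<omega>)) \<partial>\<mu>)"
    proof (rule nn_integral_add)
      show "(\<lambda>\<omega>. ennreal (norm (g (T \<omega>) - F n (T \<omega>)))) \<in> borel_measurable \<mu>"
        using measurable_comp[OF T dmeas[of n]] by (simp add: o_def)
      show "(\<lambda>\<omega>. ennreal (norm (f \<omega> - s n \<omega>))) \<in> borel_measurable \<mu>"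
        using smeas[of n] by simp
    qed
    also have "(\<integral>\<^sup>+\<omega>. ennreal (norm (g (T \<omega>) - F n (T \<omega>))) \<partial>\<mu>) = (\<integral>\<^sup>+p. ennreal (norm (g p - F n p)) \<partial>\<nu>)"
      unfolding \<nu>_def
      by (rule nn_integral_distr[symmetric, OF T]) (use dmeas\<nu>[of n] \<nu>_def in simp)
    finally show ?thesis .
  qed
  define a where "a n = ennreal (norm (Bochner_Integration.simple_bochner_integral \<nu> (F n) - Pt (Bochner_Integration.simple_bochner_integral \<mu> (s n))))" for n
  define b where "b n = (\<integral>\<^sup>+p. ennreal (norm (g p - F n p)) \<partial>\<nu>) + (\<integral>\<^sup>+\<omega>. ennreal (norm (f \<omega> - s n \<omega>)) \<partial>\<mu>)" for n
  have ab: "\<forall>\<^sub>F n in sequentially. a n \<le> b n" unfolding a_def b_def by (intro always_eventually allI est)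
  have a0: "\<forall>\<^sub>F n in sequentially. 0 \<le> a n" by simp
  have "b \<longlonglongrightarrow> 0 + 0" unfolding b_def by (rule tendsto_add[OF FL1 sL1])
  then have b0: "b \<longlonglongrightarrow> 0" by simp
  have "a \<longlonglongrightarrow> 0" by (rule tendsto_sandwich[OF a0 ab tendsto_const b0])
  then have "(\<lambda>n. ennreal (norm (Bochner_Integration.simple_bochner_integral \<nu> (F n) - Pt (Bochner_Integration.simple_bochner_integral \<mu> (s n))))) \<longlonglongrightarrow> 0"
    unfolding a_def .
  then have "(\<lambda>n. ennreal (norm (Bochner_Integration.simple_bochner_integral \<nu> (F n) - Pt (Bochner_Integration.simple_bochner_integral \<mu> (s n))))) \<longlonglongrightarrow> ennreal 0"
    by simp
  then have "(\<lambda>n. norm (Bochner_Integration.simple_bochner_integral \<nu> (F n) - Pt (Bochner_Integration.simple_bochner_integral \<mu> (s n)))) \<longlonglongrightarrow> 0"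
    by (rule tendsto_ennrealD) simp_all
  then have "(\<lambda>n. Bochner_Integration.simple_bochner_integral \<nu> (F n) - Pt (Bochner_Integration.simple_bochner_integral \<mu> (s n))) \<longlonglongrightarrow> 0"
    by (rule tendsto_norm_zero_cancel)
  then have Ilim: "(\<lambda>n. Bochner_Integration.simple_bochner_integral \<nu> (F n)) \<longlonglongrightarrow> Pt v"
    by (rule Lim_transform[OF bounded_linear.tendsto[OF Pt slim]])
  show ?thesis
    unfolding gen_has_bochner_integral_def \<nu>_def[symmetric]
    by (intro exI[of _ F] conjI allI Fsbi Fae dmeas\<nu> FL1 Ilim)
qed

lemma tensor_ext_eq:
  fixes t1 :: "'a::banach \<Rightarrow> 'b::banach \<Rightarrow> 's::banach" and F G :: "'s \<Rightarrow> 't::banach"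
  assumes t1: "is_proj_tensor t1" and F: "bounded_linear F" and G: "bounded_linear G"
    and eq: "\<And>x y. F (t1 x y) = G (t1 x y)"
  shows "F w = G w"
proof -
  have dense: "closure (span (range (\<lambda>(x, y). t1 x y))) = UNIV"
    using t1 unfolding is_proj_tensor_def by blast
  have sub: "subspace {w. F w = G w}" unfolding subspace_def
    by (auto simp: linear_0[OF bounded_linear.linear[OF F]] linear_0[OF bounded_linear.linear[OF G]]
        linear_add[OF bounded_linear.linear[OF F]] linear_add[OF bounded_linear.linear[OF G]]
        linear_scale[OF bounded_linear.linear[OF F]] linear_scale[OF bounded_linear.linear[OF G]])
  have "range (\<lambda>(x, y). t1 x y) \<subseteq> {w. F w = G w}" using eq by auto
  then have "span (range (\<lambda>(x, y). t1 x y)) \<subseteq> {w. F w = G w}" using sub by (rule span_minimal)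
  moreover have "closed {w. F w = G w}"
    by (intro closed_Collect_eq linear_continuous_on F G)
  ultimately have "closure (span (range (\<lambda>(x, y). t1 x y))) \<subseteq> {w. F w = G w}"
    by (rule closure_minimal)
  then show ?thesis using dense by auto
qed

theorem corollary2p10:
  fixes tXY :: "'a::banach \<Rightarrow> 'b::banach \<Rightarrow> 's::banach"
    and tXZ :: "'a \<Rightarrow> 'c::banach \<Rightarrow> 't::banach"
    and J :: "'c \<Rightarrow> 'b" and P :: "'b \<Rightarrow> 'c"
  assumes "is_proj_tensor tXY"
    and "is_proj_tensor tXZ"
    and "linear J" and "\<forall>z. norm (J z) = norm z"
    and "bounded_linear P" and "\<forall>z. P (J z) = z" and "onorm P = 1"
    and "\<forall>u. INA_pi tXY u"
  shows "\<forall>u. INA_pi tXZ u"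
proof
  fix u :: 't
  note tY = assms(1) and tZ = assms(2) and J = assms(3) and Jn = assms(4) and P = assms(5)
    and PJ = assms(6) and oP = assms(7) and INA = assms(8)
  have tYb: "bounded_bilinear tXY" and tYn: "\<And>x y. norm (tXY x y) \<le> norm x * norm y"
    using tY unfolding is_proj_tensor_def by blast+
  have tZb: "bounded_bilinear tXZ" and tZn: "\<And>x y. norm (tXZ x y) \<le> norm x * norm y"
    using tZ unfolding is_proj_tensor_def by blast+
  have Pn: "norm (P y) \<le> norm y" for y
    using onorm[OF P, of y] oP by simp
  obtain Pt where Pt: "bounded_linear Pt" "\<And>x y. Pt (tXY x y) = tXZ x (P y)" "\<And>w. norm (Pt w) \<le> norm w"
    using tensor_map[OF tY tZb tZn bounded_linear.linear[OF P] Pn hahn_banach_norming] by blast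
  obtain Jt where Jt: "bounded_linear Jt" "\<And>x z. Jt (tXZ x z) = tXY x (J z)" "\<And>w. norm (Jt w) \<le> norm w"
    using tensor_map[OF tZ tYb tYn J _ hahn_banach_norming] Jn by force
  have PJt: "Pt (Jt w) = w" for w
    by (rule tensor_ext_eq[OF tZ bounded_linear_compose[OF Pt(1) Jt(1)] bounded_linear_ident])
       (simp add: Jt(2) Pt(2) PJ)
  define v where "v = Jt u"
  have nv: "norm v = norm u"
  proof -
    have "norm u = norm (Pt v)" using PJt v_def by simp
    also have "\<dots> \<le> norm v" by (rule Pt(3))
    finally show ?thesis using Jt(3)[of u] v_def by simp
  qed
  obtain \<mu> :: "('a \<times> 'b) measure" where
    \<mu>: "space \<mu> = cball 0 1 \<times> cball 0 1" "sets \<mu> = sets (restrict_space borel (cball 0 1 \<times> cball 0 1))"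
      "finite_measure \<mu>" "gen_has_bochner_integral \<mu> (\<lambda>(x, y). tXY x y) v" "measure \<mu> (space \<mu>) = norm v"
    using INA[rule_format, of v] unfolding INA_pi_def by blast
  define N :: "('a \<times> 'c) measure" where "N = restrict_space borel (cball 0 1 \<times> cball 0 1)"
  define T :: "'a \<times> 'b \<Rightarrow> 'a \<times> 'c" where "T p = (fst p, P (snd p))" for p
  have spN: "space N = cball 0 1 \<times> cball 0 1" unfolding N_def by (simp add: space_restrict_space)
  have cPs: "continuous_on UNIV (\<lambda>x::'a \<times> 'b. P (snd x))"
    by (rule continuous_on_compose2[OF linear_continuous_on[OF P] continuous_on_snd[OF continuous_on_id]]) auto
  have Tcont: "continuous_on UNIV T" unfolding T_def
    by (intro continuous_intros cPs)
  have T: "T \<in> measurable \<mu> N"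
  proof -
    have "T \<in> measurable (restrict_space borel (cball 0 1 \<times> cball 0 1)) N"
      unfolding N_def
    proof (rule measurable_restrict_space3[OF borel_measurable_continuous_onI[OF Tcont]])
      show "T \<in> cball 0 1 \<times> cball 0 1 \<rightarrow> cball 0 1 \<times> cball (0::'c) 1"
        unfolding T_def using Pn by (auto intro: order_trans[OF Pn])
    qed
    then show ?thesis by (subst measurable_cong_sets[OF \<mu>(2) refl])
  qed
  have Tsurj: "T ` space \<mu> = space N"
  proof
    show "T ` space \<mu> \<subseteq> space N" using measurable_space[OF T] by auto
    show "space N \<subseteq> T ` space \<mu>"
    proof
      fix p assume "p \<in> space N"
      then obtain x z where p: "p = (x, z)" "norm x \<le> 1" "norm z \<le> 1" using spN by (cases p) auto
      have "(x, J z) \<in> space \<mu>" using \<mu>(1) p Jn by auto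
      moreover have "T (x, J z) = p" unfolding T_def using p PJ by simp
      ultimately show "p \<in> T ` space \<mu>" by force
    qed
  qed
  define g :: "'a \<times> 'c \<Rightarrow> 't" where "g = (\<lambda>(x, z). tXZ x z)"
  have gcont: "continuous_on UNIV g"
  proof -
    have "continuous_on UNIV (\<lambda>p::'a \<times> 'c. tXZ (fst p) (snd p))"
      by (intro bounded_bilinear.continuous_on[OF tZb] continuous_intros)
    then show ?thesis unfolding g_def by (simp add: case_prod_beta')
  qed
  have gbor: "g \<in> borel_measurable N"
    unfolding N_def by (rule borel_measurable_continuous_on_restrict[OF continuous_on_subset[OF gcont]]) simp
  have gmeas: "(\<lambda>p. dist (g p) c) \<in> borel_measurable N" for c
  proof -
    have "continuous_on UNIV (\<lambda>p. dist (g p) c)" by (intro continuous_intros gcont)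
    then show ?thesis unfolding N_def
      by (rule borel_measurable_continuous_on_restrict[OF continuous_on_subset]) simp
  qed
  have gclosed: "{p \<in> space N. g p \<in> C} \<in> sets N" if "closed C" for C
  proof -
    have "g -` C \<inter> space N \<in> sets N" by (rule measurable_sets[OF gbor borel_closed[OF that]])
    moreover have "{p \<in> space N. g p \<in> C} = g -` C \<inter> space N" by auto
    ultimately show ?thesis by simp
  qed
  have gbd: "norm (g p) \<le> 1" if pN: "p \<in> space N" for p
  proof -
    obtain x z where p: "p = (x, z)" "norm x \<le> 1" "norm z \<le> 1" using pN spN by (cases p) auto
    have "norm (g p) \<le> norm x * norm z" unfolding p g_def using tZn by simp
    also have "\<dots> \<le> 1" using p by (simp add: mult_le_one)
    finally show ?thesis .
  qed
  have gT: "g (T \<omega>) = Pt ((\<lambda>(x, y). tXY x y) \<omega>)" if "\<omega> \<in> space \<mu>" for \<omega>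
    unfolding g_def T_def by (cases \<omega>) (simp add: Pt(2))
  have ne: "space \<mu> \<noteq> {}" using \<mu>(1) by auto
  have int: "gen_has_bochner_integral (distr \<mu> N T) g (Pt v)"
    by (rule transfer_integral[OF \<mu>(3) T Tsurj \<mu>(4) Pt(1) Pt(3) gT gmeas gclosed gbd ne])
  have Ptv: "Pt v = u" using PJt v_def by simp
  show "INA_pi tXZ u" unfolding INA_pi_def
  proof (intro exI[of _ "distr \<mu> N T"] conjI)
    show "space (distr \<mu> N T) = cball 0 1 \<times> cball 0 1" using spN by simp
    show "sets (distr \<mu> N T) = sets (restrict_space borel (cball 0 1 \<times> cball 0 1))" unfolding N_def by simp
    show "finite_measure (distr \<mu> N T)" by (rule finite_measure.finite_measure_distr[OF \<mu>(3) T])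
    show "gen_has_bochner_integral (distr \<mu> N T) (\<lambda>(x, y). tXZ x y) u" using int Ptv unfolding g_def by simp
    have "measure (distr \<mu> N T) (space (distr \<mu> N T)) = measure \<mu> (T -` space N \<inter> space \<mu>)"
      by (simp add: measure_distr[OF T])
    also have "T -` space N \<inter> space \<mu> = space \<mu>" using measurable_space[OF T] by auto
    finally show "measure (distr \<mu> N T) (space (distr \<mu> N T)) = norm u" using \<mu>(5) nv by simp
  qed
qed

end
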